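(* If $G$ is a clique-regular graph with respect to a clique partition $F$, then $\mathcal E(\mathcal Q_F)=\mathcal E(G)$.
   Context: All graphs are finite and simple, $V(G)=\{1,\dots,n\}$. A clique partition of $G$ is a set $F=\{C_1,\dots,C_k\}$ of cliques such that every edge lies in exactly one $C_j$. $\mathcal M_F$ is the $n\times k$ $(0,1)$-matrix with $(i,j)$-entry $1$ iff $i\in C_j$, and $\mathcal Q_F=\mathcal M_F\mathcal M_F^T$. The clique-degree $t_i^F$ is the number of cliques of $F$ containing $i$; $G$ is clique-regular if all $t_i^F$ are equal. $\mathcal E(\mathcal Q_F)=\sum_{i=1}^n|\lambda_i(\mathcal Q_F)-\bar t|$ with $\bar t=\frac1n\sum_{i=1}^n t_i^F$, and $\mathcal E(G)=\sum_{i=1}^n|\lambda_i(G)|$ is the sum of absolute values of the adjacency eigenvalues. *)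

theory Defs
  imports "Jordan_Normal_Form.Char_Poly"
begin

text \<open>Simple graph on vertex set {0..<n} (0-based indexing of the paper's {1..n}),
  given by a symmetric irreflexive adjacency relation E.\<close>
definition simple_graph :: "nat \<Rightarrow> (nat \<Rightarrow> nat \<Rightarrow> bool) \<Rightarrow> bool" where
  "simple_graph n E \<longleftrightarrow> (\<forall>i<n. \<forall>j<n. E i j \<longrightarrow> E j i) \<and> (\<forall>i<n. \<not> E i i)"

definition is_clique :: "nat \<Rightarrow> (nat \<Rightarrow> nat \<Rightarrow> bool) \<Rightarrow> nat set \<Rightarrow> bool" where
  "is_clique n E C \<longleftrightarrow> C \<noteq> {} \<and> C \<subseteq> {0..<n} \<and> (\<forall>i\<in>C. \<forall>j\<in>C. i \<noteq> j \<longrightarrow> E i j)"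

text \<open>A clique partition F = {C_1,...,C_k}, represented as a list without repetitions
  (the list order fixes the column order of M_F).\<close>
definition clique_partition :: "nat \<Rightarrow> (nat \<Rightarrow> nat \<Rightarrow> bool) \<Rightarrow> nat set list \<Rightarrow> bool" where
  "clique_partition n E F \<longleftrightarrow> distinct F \<and> (\<forall>C\<in>set F. is_clique n E C) \<and>
     (\<forall>i<n. \<forall>j<n. E i j \<longrightarrow> (\<exists>!C. C \<in> set F \<and> i \<in> C \<and> j \<in> C))"

definition adj_matrix :: "nat \<Rightarrow> (nat \<Rightarrow> nat \<Rightarrow> bool) \<Rightarrow> real mat" where
  "adj_matrix n E = mat n n (\<lambda>(i,j). if E i j then 1 else 0)"

definition incidence_matrix :: "nat \<Rightarrow> nat set list \<Rightarrow> real mat" where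
  "incidence_matrix n F = mat n (length F) (\<lambda>(i,j). if i \<in> F ! j then 1 else 0)"

definition Q_matrix :: "nat \<Rightarrow> nat set list \<Rightarrow> real mat" where
  "Q_matrix n F = incidence_matrix n F * transpose_mat (incidence_matrix n F)"

definition clique_degree :: "nat set list \<Rightarrow> nat \<Rightarrow> nat" where
  "clique_degree F i = card {C \<in> set F. i \<in> C}"

definition clique_regular :: "nat \<Rightarrow> nat set list \<Rightarrow> bool" where
  "clique_regular n F \<longleftrightarrow> (\<exists>t. \<forall>i<n. clique_degree F i = t)"

definition avg_clique_degree :: "nat \<Rightarrow> nat set list \<Rightarrow> real" where
  "avg_clique_degree n F = (\<Sum>i<n. real (clique_degree F i)) / real n"

text \<open>Sum over the eigenvalues (with algebraic multiplicity, as roots of the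
  characteristic polynomial over \<complex>) of |lambda - c|.\<close>
definition shifted_energy :: "real mat \<Rightarrow> real \<Rightarrow> real" where
  "shifted_energy A c =
     (let p = char_poly (map_mat complex_of_real A) in
      \<Sum>z\<in>{z. poly p z = 0}. real (order z p) * cmod (z - complex_of_real c))"

definition Q_energy :: "nat \<Rightarrow> nat set list \<Rightarrow> real" where
  "Q_energy n F = shifted_energy (Q_matrix n F) (avg_clique_degree n F)"

definition graph_energy :: "nat \<Rightarrow> (nat \<Rightarrow> nat \<Rightarrow> bool) \<Rightarrow> real" where
  "graph_energy n E = shifted_energy (adj_matrix n E) 0"

end

theory Submission imports Defs begin

lemma pcompose_lin_power: "pcompose ([:-a,1:]^n) [:-c,1:] = [:-(a+c),1:]^(n::nat)"
  for a c :: "'a::comm_ring_1"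
proof (induction n)
  case 0 then show ?case by (simp add: pcompose_1)
next
  case (Suc n)
  have l: "pcompose [:-a,1:] [:-c,1:] = [:-(a+c),1:]"
    by (simp add: pcompose_pCons one_pCons)
  show ?case unfolding power_Suc pcompose_mult l Suc.IH ..
qed

lemma pcompose_dvd: "p dvd q \<Longrightarrow> pcompose p r dvd pcompose q r"
  by (metis dvd_def pcompose_mult)

lemma order_shift_le: "order a p \<le> order (a + c) (pcompose p [:-c,1:])"
  for a c :: "'a::idom"
proof (cases "p = 0")
  case True
  then show ?thesis by (simp add: order_def)
next
  case False
  have q0: "pcompose p [:-c,1:] \<noteq> 0" using False by (simp add: pcompose_eq_0_iff)
  have "[:-a,1:]^order a p dvd p" by (rule order_1)
  then have "[:-(a+c),1:]^order a p dvd pcompose p [:-c,1:]"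
    using pcompose_dvd[of "[:-a,1:]^order a p" p "[:-c,1:]"] by (simp only: pcompose_lin_power)
  then show ?thesis using q0 order_divides[of "a+c" "order a p" "pcompose p [:-c,1:]"] by blast
qed

lemma order_shift: "order (a + c) (pcompose p [:-c,1:]) = order a p"
  for a c :: "'a::idom"
proof (rule antisym)
  have "pcompose (pcompose p [:-c,1:]) [:c,1:] = p"
    by (simp add: pcompose_assoc[symmetric] pcompose_pCons)
  then show "order (a + c) (pcompose p [:-c,1:]) \<le> order a p"
    using order_shift_le[of "a+c" "pcompose p [:-c,1:]" "-c"] by simp
qed (rule order_shift_le)

lemma char_poly_shift:
  fixes B :: "complex mat"
  assumes B: "B \<in> carrier_mat n n"
  shows "char_poly (B + d \<cdot>\<^sub>m 1\<^sub>m n) = pcompose (char_poly B) [:-d,1:]"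
proof -
  have "poly (char_poly (B + d \<cdot>\<^sub>m 1\<^sub>m n)) k = poly (pcompose (char_poly B) [:-d,1:]) k" for k
  proof -
    have "char_matrix (B + d \<cdot>\<^sub>m 1\<^sub>m n) k = char_matrix B (k - d)"
      using B unfolding char_matrix_def by (intro eq_matI) (auto simp: algebra_simps)
    moreover have "B + d \<cdot>\<^sub>m 1\<^sub>m n \<in> carrier_mat n n" using B by simp
    ultimately show ?thesis
      using B by (simp add: char_poly_matrix[of _ n] poly_pcompose)
  qed
  then show ?thesis by (intro poly_ext) auto
qed

lemma shifted_energy_shift:
  fixes A :: "real mat"
  assumes A: "A \<in> carrier_mat n n"
  shows "shifted_energy (A + c \<cdot>\<^sub>m 1\<^sub>m n) c = shifted_energy A 0"
proof -
  define B where "B = map_mat complex_of_real A"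
  define cc where "cc = complex_of_real c"
  have B: "B \<in> carrier_mat n n" using A by (simp add: B_def)
  have mm: "map_mat complex_of_real (A + c \<cdot>\<^sub>m 1\<^sub>m n) = B + cc \<cdot>\<^sub>m 1\<^sub>m n"
    using A unfolding B_def cc_def by (intro eq_matI) auto
  define p where "p = char_poly B"
  have cp: "char_poly (map_mat complex_of_real (A + c \<cdot>\<^sub>m 1\<^sub>m n)) = pcompose p [:-cc,1:]"
    unfolding mm p_def by (rule char_poly_shift[OF B])
  have roots: "{z. poly (pcompose p [:-cc,1:]) z = 0} = (\<lambda>w. w + cc) ` {w. poly p w = 0}"
  proof (intro equalityI subsetI)
    fix z
    have e: "z \<in> {z. poly (pcompose p [:-cc,1:]) z = 0} \<longleftrightarrow> poly p (z - cc) = 0"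
      by (simp add: poly_pcompose algebra_simps)
    assume "z \<in> {z. poly (pcompose p [:-cc,1:]) z = 0}"
    then have "poly p (z - cc) = 0" using e by blast
    then show "z \<in> (\<lambda>w. w + cc) ` {w. poly p w = 0}" by (intro image_eqI[of _ _ "z - cc"]) auto
  next
    fix z
    assume "z \<in> (\<lambda>w. w + cc) ` {w. poly p w = 0}"
    then show "z \<in> {z. poly (pcompose p [:-cc,1:]) z = 0}" by (auto simp: poly_pcompose)
  qed
  have "shifted_energy (A + c \<cdot>\<^sub>m 1\<^sub>m n) c =
     (\<Sum>z\<in>(\<lambda>w. w + cc) ` {w. poly p w = 0}. real (order z (pcompose p [:-cc,1:])) * cmod (z - cc))"
    unfolding shifted_energy_def Let_def cc_def[symmetric] cp roots ..
  also have "\<dots> = (\<Sum>w\<in>{w. poly p w = 0}. real (order (w + cc) (pcompose p [:-cc,1:])) * cmod (w + cc - cc))"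
    by (subst sum.reindex) (auto simp: inj_on_def)
  also have "\<dots> = (\<Sum>w\<in>{w. poly p w = 0}. real (order w p) * cmod (w - complex_of_real 0))"
    by (simp add: order_shift)
  also have "\<dots> = shifted_energy A 0"
    unfolding shifted_energy_def Let_def p_def B_def ..
  finally show ?thesis .
qed

lemma card_nth_distinct:
  assumes "distinct F"
  shows "card {k \<in> {0..<length F}. P (F ! k)} = card {C \<in> set F. P C}"
proof -
  have "inj_on ((!) F) {k \<in> {0..<length F}. P (F ! k)}"
    using assms by (auto simp: inj_on_def nth_eq_iff_index_eq)
  moreover have "(!) F ` {k \<in> {0..<length F}. P (F ! k)} = {C \<in> set F. P C}"
    by (auto simp: in_set_conv_nth)
  ultimately show ?thesis by (metis card_image)
qed

lemma Q_entry:
  assumes "i < n" "j < n" and that: "distinct F"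
  shows "Q_matrix n F $$ (i,j) = real (card {C \<in> set F. i \<in> C \<and> j \<in> C})"
proof -
  have seteq: "{0..<length F} \<inter> {k. i \<in> F ! k \<and> j \<in> F ! k} = {k \<in> {0..<length F}. i \<in> F ! k \<and> j \<in> F ! k}"
    by auto
  have "Q_matrix n F $$ (i,j) = (\<Sum>k\<in>{0..<length F}. (if i \<in> F ! k \<and> j \<in> F ! k then 1 else 0))"
    using assms unfolding Q_matrix_def incidence_matrix_def
    by (auto simp: scalar_prod_def intro!: sum.cong)
  also have "\<dots> = real (card {k \<in> {0..<length F}. i \<in> F ! k \<and> j \<in> F ! k})"
    unfolding sum.If_cases[OF finite_atLeastLessThan] seteq by simp
  also have "\<dots> = real (card {C \<in> set F. i \<in> C \<and> j \<in> C})"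
    using card_nth_distinct[OF that, of "\<lambda>C. i \<in> C \<and> j \<in> C"] by simp
  finally show ?thesis .
qed

theorem mainTheorem9:
  fixes n :: nat and E :: "nat \<Rightarrow> nat \<Rightarrow> bool" and F :: "nat set list"
  assumes "simple_graph n E"
    and "clique_partition n E F"
    and "clique_regular n F"
  shows "Q_energy n F = graph_energy n E"
proof -
  obtain t where t: "\<And>i. i < n \<Longrightarrow> clique_degree F i = t"
    using assms(3) unfolding clique_regular_def by blast
  have dist: "distinct F" using assms(2) unfolding clique_partition_def by blast
  let ?c = "avg_clique_degree n F"
  have avg: "n > 0 \<Longrightarrow> ?c = real t"
    unfolding avg_clique_degree_def using t by simp
  have A: "adj_matrix n E \<in> carrier_mat n n" unfolding adj_matrix_def by simp
  have Q: "Q_matrix n F = adj_matrix n E + ?c \<cdot>\<^sub>m 1\<^sub>m n"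
  proof (rule eq_matI)
    fix i j assume i: "i < dim_row (adj_matrix n E + ?c \<cdot>\<^sub>m 1\<^sub>m n)"
      and j: "j < dim_col (adj_matrix n E + ?c \<cdot>\<^sub>m 1\<^sub>m n)"
    then have i: "i < n" and j: "j < n" using A by auto
    have rhs: "(adj_matrix n E + ?c \<cdot>\<^sub>m 1\<^sub>m n) $$ (i,j) =
        (if E i j then 1 else 0) + (if i = j then real t else 0)"
      using i j avg by (simp add: adj_matrix_def)
    have lhs: "Q_matrix n F $$ (i,j) = real (card {C \<in> set F. i \<in> C \<and> j \<in> C})"
      using Q_entry[OF i j dist] .
    show "Q_matrix n F $$ (i,j) = (adj_matrix n E + ?c \<cdot>\<^sub>m 1\<^sub>m n) $$ (i,j)"
    proof (cases "i = j")
      case True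
      have "\<not> E i i" using assms(1) i unfolding simple_graph_def by blast
      moreover have "card {C \<in> set F. i \<in> C \<and> i \<in> C} = t"
        using t[OF i] unfolding clique_degree_def by simp
      ultimately show ?thesis using lhs rhs True by simp
    next
      case False
      show ?thesis
      proof (cases "E i j")
        case True
        then obtain C0 where C0: "C0 \<in> set F \<and> i \<in> C0 \<and> j \<in> C0"
          and u: "\<And>C. C \<in> set F \<and> i \<in> C \<and> j \<in> C \<Longrightarrow> C = C0"
          using assms(2) i j unfolding clique_partition_def by metis
        have "{C \<in> set F. i \<in> C \<and> j \<in> C} = {C0}" using C0 u by blast
        then show ?thesis using lhs rhs True False by simp
      next
        case nE: False
        have "{C \<in> set F. i \<in> C \<and> j \<in> C} = {}"
          using assms(2) False nE unfolding clique_partition_def is_clique_def by blast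
        then show ?thesis using lhs rhs nE False by simp
      qed
    qed
  qed (auto simp: Q_matrix_def incidence_matrix_def adj_matrix_def)
  show ?thesis
    unfolding Q_energy_def graph_energy_def Q by (rule shifted_energy_shift[OF A])
qed

end
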